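(* Let $L_A$ and $L_B$ be two orderings (lists) of the same set $\mathbb{E}$ of $n$ elements, let $e\in\mathbb{E}$ have position $x$ in $L_A$, and let $y\ge 1$ be an integer such that the position of $e$ in $L_B$ is at most $y$. Let $\phi$ denote the number of inversions between $L_A$ and $L_B$ (ordered pairs $(i,j)$ with $i$ before $j$ in $L_A$ and after $j$ in $L_B$), and let $\Delta\phi$ be the change in $\phi$ when $e$ is moved to the front of $L_A$ (keeping the relative order of the other elements) while $L_B$ is unchanged. Then $$3x+4\Delta\phi-\psi(x,y)\le 0,$$ where $\psi(x,y)=7x$ if $1\le x\le y$, $\psi(x,y)=8y-x$ if $y\le x\le 8y$, and $\psi(x,y)=0$ if $x\ge 8y$.
   Context: Positions in a list are numbered $1,\dots,n$ from the head. *)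

theory Defs
  imports Main
begin

(* 0-based index of the first occurrence of x in L (length L if absent) *)
primrec idx :: "'a list \<Rightarrow> 'a \<Rightarrow> nat" where
  "idx [] x = 0"
| "idx (a # L) x = (if a = x then 0 else Suc (idx L x))"

definition pos :: "'a list \<Rightarrow> 'a \<Rightarrow> nat" where
  "pos L x = idx L x + 1"

definition before :: "'a list \<Rightarrow> 'a \<Rightarrow> 'a \<Rightarrow> bool" where
  "before L i j \<longleftrightarrow> i \<in> set L \<and> j \<in> set L \<and> pos L i < pos L j"

definition inversions :: "'a list \<Rightarrow> 'a list \<Rightarrow> nat" where
  "inversions LA LB = card {(i, j). before LA i j \<and> before LB j i}"

definition move_to_front :: "'a \<Rightarrow> 'a list \<Rightarrow> 'a list" where
  "move_to_front e L = e # removeAll e L"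

definition psi :: "nat \<Rightarrow> nat \<Rightarrow> int" where
  "psi x y = (if 1 \<le> x \<and> x \<le> y then 7 * int x
              else if y \<le> x \<and> x \<le> 8 * y then 8 * int y - int x
              else 0)"

end

theory Submission
  imports Defs
begin

lemma idx_nth: "i \<in> set L \<Longrightarrow> idx L i < length L \<and> L ! idx L i = i"
  by (induction L) auto

lemma idx_inj: "i \<in> set L \<Longrightarrow> j \<in> set L \<Longrightarrow> idx L i = idx L j \<Longrightarrow> i = j"
  by (metis idx_nth)

lemma before_idx: "before L i j \<longleftrightarrow> i \<in> set L \<and> j \<in> set L \<and> idx L i < idx L j"
  by (simp add: before_def pos_def)

lemma before_total: "i \<in> set L \<Longrightarrow> j \<in> set L \<Longrightarrow> i \<noteq> j \<Longrightarrow> before L i j \<or> before L j i"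
  using idx_inj[of i L j] unfolding before_idx by linarith

lemma before_irr: "\<not> before L i i"
  by (simp add: before_idx)

lemma before_mem: "before L i j \<Longrightarrow> i \<in> set L \<and> j \<in> set L"
  by (simp add: before_idx)

lemma before_asym: "before L i j \<Longrightarrow> \<not> before L j i"
  by (simp add: before_idx)

lemma idx_removeAll:
  "i \<in> set L \<Longrightarrow> j \<in> set L \<Longrightarrow> i \<noteq> e \<Longrightarrow> j \<noteq> e \<Longrightarrow>
   (idx (removeAll e L) i < idx (removeAll e L) j) = (idx L i < idx L j)"
  by (induction L) auto

lemma card_before: "e \<in> set L \<Longrightarrow> distinct L \<Longrightarrow> card {a. before L a e} = idx L e"
proof (induction L)
  case Nil then show ?case by simp
next
  case (Cons b L)
  show ?case
  proof (cases "b = e")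
    case True then show ?thesis by (simp add: before_idx)
  next
    case False
    then have eL: "e \<in> set L" using Cons by auto
    have "{a. before (b # L) a e} = insert b {a. before L a e}"
      using False Cons.prems eL by (auto simp: before_idx)
    moreover have "b \<notin> {a. before L a e}" using Cons.prems by (auto simp: before_idx)
    moreover have "finite {a. before L a e}"
      by (rule finite_subset[of _ "set L"]) (auto simp: before_idx)
    ultimately show ?thesis using Cons eL False by simp
  qed
qed

theorem mainTheorem8:
  fixes LA LB :: "'a list" and E :: "'a set" and n :: nat and e :: 'a and x y :: nat
  assumes "distinct LA" and "distinct LB"
    and "set LA = E" and "set LB = E" and "card E = n"
    and "e \<in> E"
    and "pos LA e = x"
    and "1 \<le> y" and "pos LB e \<le> y"
  shows "3 * int x + 4 * (int (inversions (move_to_front e LA) LB) - int (inversions LA LB))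
           - psi x y \<le> 0"
proof -
  define LA' where "LA' = move_to_front e LA"
  have setA': "set LA' = E" using assms by (auto simp: LA'_def move_to_front_def)
  have befA': "before LA' i j \<longleftrightarrow> i \<in> E \<and> j \<in> E \<and> i \<noteq> j \<and>
      (if i = e then True else if j = e then False else before LA i j)" for i j
  proof (cases "i = e \<or> j = e")
    case True then show ?thesis using assms(3,6)
      by (auto simp: before_idx LA'_def move_to_front_def)
  next
    case False
    then show ?thesis using assms(3) idx_removeAll[of i LA j e]
      by (auto simp: before_idx LA'_def move_to_front_def)
  qed
  define A where "A = {a. before LA a e}"
  define B where "B = {b. before LB b e}"
  define S where "S = {(i, j). before LA i j \<and> before LB j i}"
  define S' where "S' = {(i, j). before LA' i j \<and> before LB j i}"
  have finS: "finite S" by (rule finite_subset[of _ "set LA \<times> set LA"]) (auto simp: S_def before_idx)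
  have finS': "finite S'" by (rule finite_subset[of _ "set LA \<times> set LA"]) (use assms(3) in \<open>auto simp: S'_def before_idx setA'\<close>)
  have finA: "finite A" by (rule finite_subset[of _ "set LA"]) (auto simp: A_def before_idx)
  have finB: "finite B" by (rule finite_subset[of _ "set LB"]) (auto simp: B_def before_idx)
  have cA: "card A = x - 1" "x \<ge> 1" using card_before[of e LA] assms by (auto simp: A_def pos_def)
  have cB: "card B \<le> y - 1" using card_before[of e LB] assms by (auto simp: B_def pos_def)
  have D1: "S' - S = (\<lambda>b. (e, b)) ` (A \<inter> B)"
  proof -
    have "p \<in> S' - S \<longleftrightarrow> p \<in> (\<lambda>b. (e, b)) ` (A \<inter> B)" for p
    proof (cases p)
      case (Pair i j)
      show ?thesis
        using before_total[of i LA j] before_total[of j LA i] before_asym[of LA] before_asym[of LB]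
          assms(3,4)
        using before_mem[of LA] before_mem[of LB] before_irr[of LA] before_irr[of LB] by (auto simp: Pair S_def S'_def A_def B_def befA')
    qed
    then show ?thesis by blast
  qed
  have D2: "S - S' = (\<lambda>a. (a, e)) ` (A - B)"
  proof -
    have "p \<in> S - S' \<longleftrightarrow> p \<in> (\<lambda>a. (a, e)) ` (A - B)" for p
    proof (cases p)
      case (Pair i j)
      show ?thesis
        using before_total[of i LB j] before_total[of j LB i] before_asym[of LA] before_asym[of LB]
          assms(3,4)
        using before_mem[of LA] before_mem[of LB] before_irr[of LA] before_irr[of LB] by (auto simp: Pair S_def S'_def A_def B_def befA')
    qed
    then show ?thesis by blast
  qed
  have c1: "card (S' - S) = card (A \<inter> B)" unfolding D1 by (rule card_image) (auto simp: inj_on_def)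
  have c2: "card (S - S') = card (A - B)" unfolding D2 by (rule card_image) (auto simp: inj_on_def)
  have e1: "card S' = card (S' \<inter> S) + card (S' - S)"
    using finS' card_Un_disjoint[of "S' \<inter> S" "S' - S"] by (metis Int_Diff_Un Int_Diff_disjoint finite_Int finite_Diff)
  have e2: "card S = card (S' \<inter> S) + card (S - S')"
    using finS card_Un_disjoint[of "S \<inter> S'" "S - S'"] by (metis Int_Diff_Un Int_Diff_disjoint finite_Int finite_Diff Int_commute)
  have c3: "card (A - B) = card A - card (A \<inter> B)" using finA finB by (simp add: card_Diff_subset_Int Diff_Int2 card_Diff_subset)
  have k1: "card (A \<inter> B) \<le> card A" using finA by (simp add: card_mono)
  have k2: "card (A \<inter> B) \<le> card B" using finB by (simp add: card_mono)
  have inv: "inversions LA' LB = card S'" "inversions LA LB = card S"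
    by (simp_all add: inversions_def S_def S'_def)
  show ?thesis
    unfolding LA'_def[symmetric] inv using e1 e2 c1 c2 c3 k1 k2 cA cB assms(8)
    by (simp add: psi_def) linarith
qed

end
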